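(* The set of non-zero normal elements of $A$ (elements $u\neq0$ with $uA=Au$) is exactly $\{\lambda x^i:\lambda\in\Bbbk^\times,\ i\geq0\}$.
   Context: Let $\Bbbk$ be a field of characteristic zero and $N\geq1$ an integer. Let $A=A_N$ be the $\Bbbk$-algebra generated by $x,y$ subject to the relation $yx-xy=x^N$. *)

theory Defs
  imports Main
begin

text \<open>The free associative algebra k<x,y> is modelled concretely as finitely supported
  functions from words over {x,y} (False = x, True = y) to k, with concatenation product.
  A_N is the quotient by the two-sided ideal generated by yx - xy - x^N; we work with
  representatives and the congruence modulo that ideal.\<close>

type_synonym 'k fa = "bool list \<Rightarrow> 'k"

definition fin :: "'k::zero fa set" where
  "fin = {f. finite {w. f w \<noteq> 0}}"

definition fadd :: "'k::plus fa \<Rightarrow> 'k fa \<Rightarrow> 'k fa" where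
  "fadd f g = (\<lambda>w. f w + g w)"

definition fsub :: "'k::minus fa \<Rightarrow> 'k fa \<Rightarrow> 'k fa" where
  "fsub f g = (\<lambda>w. f w - g w)"

definition fsmul :: "'k::times \<Rightarrow> 'k fa \<Rightarrow> 'k fa" where
  "fsmul c f = (\<lambda>w. c * f w)"

definition fmul :: "'k::comm_semiring_1 fa \<Rightarrow> 'k fa \<Rightarrow> 'k fa" where
  "fmul f g = (\<lambda>w. \<Sum>i\<le>length w. f (take i w) * g (drop i w))"

definition fmon :: "bool list \<Rightarrow> 'k::zero_neq_one fa" where
  "fmon u = (\<lambda>w. if w = u then 1 else 0)"

definition genX :: "'k::zero_neq_one fa" where "genX = fmon [False]"
definition genY :: "'k::zero_neq_one fa" where "genY = fmon [True]"

definition Xpow :: "nat \<Rightarrow> 'k::zero_neq_one fa" where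
  "Xpow i = fmon (replicate i False)"

definition relA :: "nat \<Rightarrow> 'k::comm_ring_1 fa" where
  "relA N = fsub (fsub (fmul genY genX) (fmul genX genY)) (Xpow N)"

inductive_set idealA :: "nat \<Rightarrow> 'k::comm_ring_1 fa set" for N where
  gen: "relA N \<in> idealA N"
| zero: "(\<lambda>_. 0) \<in> idealA N"
| add: "a \<in> idealA N \<Longrightarrow> b \<in> idealA N \<Longrightarrow> fadd a b \<in> idealA N"
| mul: "a \<in> idealA N \<Longrightarrow> p \<in> fin \<Longrightarrow> q \<in> fin \<Longrightarrow> fmul (fmul p a) q \<in> idealA N"

definition eqA :: "nat \<Rightarrow> 'k::comm_ring_1 fa \<Rightarrow> 'k fa \<Rightarrow> bool" where
  "eqA N f g \<longleftrightarrow> fsub f g \<in> idealA N"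

definition normalA :: "nat \<Rightarrow> 'k::comm_ring_1 fa \<Rightarrow> bool" where
  "normalA N u \<longleftrightarrow>
     (\<forall>a\<in>fin. \<exists>b\<in>fin. eqA N (fmul u a) (fmul b u)) \<and>
     (\<forall>a\<in>fin. \<exists>b\<in>fin. eqA N (fmul a u) (fmul u b))"

end

theory Submission
  imports Defs "HOL-Computational_Algebra.Polynomial_Factorial"
begin


definition Dd :: "nat \<Rightarrow> 'k::field_char_0 poly \<Rightarrow> 'k poly" where
  "Dd N p = monom 1 N * pderiv p"

definition Yop :: "nat \<Rightarrow> 'k::field_char_0 poly poly \<Rightarrow> 'k poly poly" where
  "Yop N Q = pCons 0 Q + map_poly (Dd N) Q"

definition mulA :: "nat \<Rightarrow> 'k::field_char_0 poly poly \<Rightarrow> 'k poly poly \<Rightarrow> 'k poly poly" where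
  "mulA N P Q = (\<Sum>j\<le>degree P. smult (coeff P j) ((Yop N ^^ j) Q))"

lemma Dd_0[simp]: "Dd N 0 = 0" by (simp add: Dd_def)
lemma Dd_add: "Dd N (p + q) = Dd N p + Dd N q" by (simp add: Dd_def pderiv_add algebra_simps)
lemma Dd_mult: "Dd N (p * q) = p * Dd N q + Dd N p * q" by (simp add: Dd_def pderiv_mult algebra_simps)
lemma Dd_const[simp]: "Dd N [:c:] = 0" by (simp add: Dd_def pderiv_pCons)

lemma coeff_Yop: "coeff (Yop N Q) n = (case n of 0 \<Rightarrow> 0 | Suc m \<Rightarrow> coeff Q m) + Dd N (coeff Q n)"
  by (simp add: Yop_def coeff_map_poly coeff_pCons)

lemma Yop_add: "Yop N (P + Q) = Yop N P + Yop N Q"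
  by (rule poly_eqI) (simp add: coeff_Yop Dd_add split: nat.split)

lemma Yop_0[simp]: "Yop N 0 = 0"
  by (rule poly_eqI) (simp add: coeff_Yop split: nat.split)

lemma Yop_diff: "Yop N (P - Q) = Yop N P - Yop N Q"
  using Yop_add[of N "P - Q" Q] by simp

lemma Yop_smult: "Yop N (smult p Z) = smult p (Yop N Z) + smult (Dd N p) Z"
  by (rule poly_eqI) (simp add: coeff_Yop Dd_mult algebra_simps split: nat.split)

lemma Yop_sum: "Yop N (\<Sum>i\<in>S. f i) = (\<Sum>i\<in>S. Yop N (f i))"
  by (induction S rule: infinite_finite_induct) (auto simp: Yop_add)

lemma Yopn_add: "(Yop N ^^ j) (P + Q) = (Yop N ^^ j) P + (Yop N ^^ j) Q"
  by (induction j) (auto simp: Yop_add)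

lemma Yopn_0[simp]: "(Yop N ^^ j) 0 = 0"
  by (induction j) auto

lemma Yopn_diff: "(Yop N ^^ j) (P - Q) = (Yop N ^^ j) P - (Yop N ^^ j) Q"
  by (induction j) (auto simp: Yop_diff)

lemma Yopn_sum: "(Yop N ^^ j) (\<Sum>i\<in>S. f i) = (\<Sum>i\<in>S. (Yop N ^^ j) (f i))"
  by (induction S rule: infinite_finite_induct) (auto simp: Yopn_add)

lemma degree_Yop: "degree (Yop N Q) \<le> degree Q + 1"
proof -
  have "degree (map_poly (Dd N) Q) \<le> degree Q" by (rule map_poly_degree_leq)
  moreover have "degree (pCons 0 Q) \<le> degree Q + 1" by (simp add: degree_pCons_le)
  ultimately show ?thesis unfolding Yop_def by (meson degree_add_le le_trans nat_le_linear add_le_mono1 le_add1)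
qed

lemma coeff_Yop_top: "coeff (Yop N Q) (Suc (degree Q)) = lead_coeff Q"
  by (simp add: coeff_Yop coeff_eq_0)

lemma degree_Yop_eq: "Q \<noteq> 0 \<Longrightarrow> degree (Yop N Q) = Suc (degree Q) \<and> lead_coeff (Yop N Q) = lead_coeff Q"
  using degree_Yop[of N Q] coeff_Yop_top[of N Q]
  by (metis Suc_eq_plus1 le_antisym leading_coeff_0_iff le_degree)

lemma degree_Yopn_eq: "Q \<noteq> 0 \<Longrightarrow> degree ((Yop N ^^ j) Q) = degree Q + j \<and> lead_coeff ((Yop N ^^ j) Q) = lead_coeff Q"
proof (induction j)
  case 0 then show ?case by simp
next
  case (Suc j)
  then have nz: "(Yop N ^^ j) Q \<noteq> 0" by auto
  from degree_Yop_eq[OF nz, of N] Suc have "degree ((Yop N ^^ Suc j) Q) = degree Q + Suc j" by simp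
  moreover have "lead_coeff ((Yop N ^^ Suc j) Q) = lead_coeff Q"
  proof -
    have "lead_coeff ((Yop N ^^ Suc j) Q) = lead_coeff (Yop N ((Yop N ^^ j) Q))" by simp
    also have "\<dots> = lead_coeff ((Yop N ^^ j) Q)" using degree_Yop_eq[OF nz, of N] by blast
    also have "\<dots> = lead_coeff Q" using Suc by blast
    finally show ?thesis .
  qed
  ultimately show ?case by simp
qed

lemma degree_Yopn_le: "degree ((Yop N ^^ j) Q) \<le> degree Q + j"
  by (cases "Q = 0") (auto simp: degree_Yopn_eq)

lemma smult_sum_right: "smult p (\<Sum>i\<in>S. f i) = (\<Sum>i\<in>S. smult p (f i))"
  by (induction S rule: infinite_finite_induct) (auto simp: smult_add_right)

lemma mulA_bound: "degree P \<le> n \<Longrightarrow> mulA N P Q = (\<Sum>j\<le>n. smult (coeff P j) ((Yop N ^^ j) Q))"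
  unfolding mulA_def
  by (rule sum.mono_neutral_left) (auto simp: coeff_eq_0)

lemma mulA_add_left: "mulA N (P + P') Q = mulA N P Q + mulA N P' Q"
proof -
  define n where "n = max (degree P) (degree P')"
  have "degree (P + P') \<le> n" unfolding n_def by (rule degree_add_le) auto
  then show ?thesis
    by (simp add: mulA_bound[of _ n] n_def sum.distrib smult_add_left)
qed

lemma mulA_0_left[simp]: "mulA N 0 Q = 0" by (simp add: mulA_def)
lemma mulA_0_right[simp]: "mulA N P 0 = 0" by (simp add: mulA_def)

lemma mulA_smult_left: "mulA N (smult p P) Q = smult p (mulA N P Q)"
  by (simp add: mulA_bound[of "smult p P" "degree P"] mulA_def smult_sum_right degree_smult_le)

lemma mulA_diff_left: "mulA N (P - P') Q = mulA N P Q - mulA N P' Q"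
  using mulA_add_left[of N "P - P'" P' Q] by simp

lemma mulA_add_right: "mulA N P (Q + Q') = mulA N P Q + mulA N P Q'"
  by (simp add: mulA_def Yopn_add smult_add_right sum.distrib)

lemma mulA_smult_right: "mulA N P (smult c Q) = smult c (mulA N P Q)" if "c = [:a:]"
proof -
  have "(Yop N ^^ j) (smult c Q) = smult c ((Yop N ^^ j) Q)" for j
    by (induction j) (auto simp: Yop_smult that)
  then show ?thesis by (simp add: mulA_def smult_sum_right mult.commute)
qed

lemma mulA_sum_left: "mulA N (\<Sum>i\<in>S. f i) Q = (\<Sum>i\<in>S. mulA N (f i) Q)"
  by (induction S rule: infinite_finite_induct) (auto simp: mulA_add_left)

lemma mulA_sum_right: "mulA N P (\<Sum>i\<in>S. f i) = (\<Sum>i\<in>S. mulA N P (f i))"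
  by (induction S rule: infinite_finite_induct) (auto simp: mulA_add_right)

lemma mulA_const_left: "mulA N [:p:] Q = smult p Q"
  by (simp add: mulA_def)

lemma mulA_1_left[simp]: "mulA N 1 Q = Q"
  by (simp add: mulA_def)

lemma mulA_Yop_left: "mulA N (Yop N P) Q = Yop N (mulA N P Q)"
proof -
  define n where "n = degree P"
  have d: "degree (Yop N P) \<le> Suc n" using degree_Yop[of N P] n_def by simp
  have "mulA N (Yop N P) Q = (\<Sum>j\<le>Suc n. smult (coeff (Yop N P) j) ((Yop N ^^ j) Q))"
    by (rule mulA_bound[OF d])
  also have "\<dots> = (\<Sum>j\<le>Suc n. smult (case j of 0 \<Rightarrow> 0 | Suc m \<Rightarrow> coeff P m) ((Yop N ^^ j) Q))
       + (\<Sum>j\<le>Suc n. smult (Dd N (coeff P j)) ((Yop N ^^ j) Q))"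
    by (simp add: coeff_Yop smult_add_left sum.distrib)
  also have "(\<Sum>j\<le>Suc n. smult (case j of 0 \<Rightarrow> 0 | Suc m \<Rightarrow> coeff P m) ((Yop N ^^ j) Q))
     = (\<Sum>j\<le>n. smult (coeff P j) ((Yop N ^^ Suc j) Q))"
    by (subst sum.atMost_Suc_shift) simp
  also have "(\<Sum>j\<le>Suc n. smult (Dd N (coeff P j)) ((Yop N ^^ j) Q))
     = (\<Sum>j\<le>n. smult (Dd N (coeff P j)) ((Yop N ^^ j) Q))"
    by (simp add: n_def coeff_eq_0)
  finally have "mulA N (Yop N P) Q = (\<Sum>j\<le>n. smult (coeff P j) ((Yop N ^^ Suc j) Q))
        + (\<Sum>j\<le>n. smult (Dd N (coeff P j)) ((Yop N ^^ j) Q))" .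
  moreover have "Yop N (mulA N P Q) = (\<Sum>j\<le>n. smult (coeff P j) ((Yop N ^^ Suc j) Q))
        + (\<Sum>j\<le>n. smult (Dd N (coeff P j)) ((Yop N ^^ j) Q))"
    by (simp add: mulA_def n_def Yop_sum Yop_smult sum.distrib)
  ultimately show ?thesis by simp
qed

primrec psiw :: "nat \<Rightarrow> bool list \<Rightarrow> 'k::field_char_0 poly poly" where
  "psiw N [] = 1"
| "psiw N (b # w) = (if b then Yop N (psiw N w) else smult (monom 1 1) (psiw N w))"

lemma psiw_append: "psiw N (w @ v) = mulA N (psiw N w) (psiw N v)"
  by (induction w) (auto simp: mulA_Yop_left mulA_smult_left)

lemma psiw_repF: "psiw N (replicate a False @ v) = smult (monom 1 a) (psiw N v)"
  by (induction a) (auto simp: mult_monom)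

lemma Yop_monom1: "Yop N (monom 1 j) = monom 1 (Suc j)"
  by (rule poly_eqI) (auto simp: coeff_Yop coeff_monom Dd_def split: nat.split)

lemma psiw_repT: "psiw N (replicate j True) = monom 1 j"
proof (induction j)
  case 0 show ?case by (simp add: monom_0 one_pCons)
next
  case (Suc j) then show ?case by (simp add: Yop_monom1)
qed

lemma psiw_nw: "psiw N (replicate a False @ replicate j True) = monom (monom 1 a) j"
  by (simp add: psiw_repF psiw_repT smult_monom)

lemma mulA_degree:
  assumes U: "U \<noteq> 0" and B: "B \<noteq> 0"
  shows "degree (mulA N U B) = degree U + degree B \<and> lead_coeff (mulA N U B) = lead_coeff U * lead_coeff B"
proof -
  define m where "m = degree U"
  have c: "coeff (mulA N U B) k = coeff U m * coeff ((Yop N ^^ m) B) k" if k: "k \<ge> m + degree B" for k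
  proof -
    have "coeff (mulA N U B) k = (\<Sum>j\<le>m. coeff U j * coeff ((Yop N ^^ j) B) k)"
      by (simp add: mulA_def m_def coeff_sum)
    also have "\<dots> = coeff U m * coeff ((Yop N ^^ m) B) k + (\<Sum>j\<in>{..m} - {m}. coeff U j * coeff ((Yop N ^^ j) B) k)"
      by (subst sum.remove[of _ m]) auto
    also have "(\<Sum>j\<in>{..m} - {m}. coeff U j * coeff ((Yop N ^^ j) B) k) = 0"
    proof (rule sum.neutral, intro ballI)
      fix j assume "j \<in> {..m} - {m}"
      then have "j < m" by auto
      then have "degree ((Yop N ^^ j) B) < k" using degree_Yopn_le[where N=N and j=j and Q=B] k by linarith
      then show "coeff U j * coeff ((Yop N ^^ j) B) k = 0" by (simp add: coeff_eq_0)
    qed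
    finally show ?thesis by simp
  qed
  have dY: "degree ((Yop N ^^ m) B) = degree B + m" and lY: "lead_coeff ((Yop N ^^ m) B) = lead_coeff B"
    using degree_Yopn_eq[OF B, where N=N and j=m] by auto
  have top: "coeff (mulA N U B) (m + degree B) = lead_coeff U * lead_coeff B"
    using c[of "m + degree B"] dY lY m_def by (simp add: add.commute)
  have nz: "lead_coeff U * lead_coeff B \<noteq> 0" using U B by simp
  have "degree (mulA N U B) \<le> m + degree B"
  proof (rule degree_le, intro allI impI)
    fix k assume "m + degree B < k"
    then show "coeff (mulA N U B) k = 0" using c[of k] dY by (simp add: coeff_eq_0)
  qed
  moreover have "m + degree B \<le> degree (mulA N U B)"
    using top nz le_degree by metis
  ultimately have "degree (mulA N U B) = m + degree B" by simp
  with top m_def show ?thesis by simp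
qed

lemma Dd_x: "Dd N (monom 1 1) = monom 1 N"
  by (simp add: Dd_def pderiv_monom mult_monom)

lemma Dd_x': "Dd N (monom 1 (Suc 0)) = monom 1 N"
  using Dd_x by simp

lemma YX_coeffs:
  fixes N :: nat
  defines "X \<equiv> [:monom 1 1:] :: 'k::field_char_0 poly poly"
  shows "degree ((Yop N ^^ j) X) = j \<and> coeff ((Yop N ^^ j) X) j = monom 1 1
     \<and> coeff ((Yop N ^^ Suc j) X) j = monom (of_nat (Suc j)) N"
proof -
  have X0: "X \<noteq> 0" unfolding X_def by simp
  have dX: "degree X = 0" "lead_coeff X = monom 1 1" unfolding X_def by auto
  have a: "degree ((Yop N ^^ j) X) = j \<and> coeff ((Yop N ^^ j) X) j = monom 1 1" for j
  proof -
    have "degree ((Yop N ^^ j) X) = j" "lead_coeff ((Yop N ^^ j) X) = monom 1 1"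
      using degree_Yopn_eq[OF X0, where N=N and j=j] dX by auto
    then show ?thesis by simp
  qed
  have b: "coeff ((Yop N ^^ Suc j) X) j = monom (of_nat (Suc j)) N" for j
  proof (induction j)
    case 0 then show ?case using a[of 0] by (simp add: coeff_Yop Dd_x Dd_x')
  next
    case (Suc j)
    have "coeff ((Yop N ^^ Suc (Suc j)) X) (Suc j) = coeff ((Yop N ^^ Suc j) X) j + Dd N (coeff ((Yop N ^^ Suc j) X) (Suc j))"
      by (simp add: coeff_Yop)
    also have "\<dots> = monom (of_nat (Suc j)) N + monom 1 N" using Suc a[of "Suc j"] by (simp add: Dd_x Dd_x')
    also have "\<dots> = monom (of_nat (Suc (Suc j))) N"
      by (subst add_monom) (simp add: algebra_simps)
    finally show ?case .
  qed
  show ?thesis using a b by blast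
qed

lemma normal_deg0:
  fixes U :: "'k::field_char_0 poly poly"
  assumes U: "U \<noteq> 0" and e: "smult (monom 1 1) U = mulA N U [:monom 1 1:]"
  shows "degree U = 0"
proof (rule ccontr)
  assume "degree U \<noteq> 0"
  then obtain n where n: "degree U = Suc n" by (cases "degree U") auto
  define X :: "'k poly poly" where "X = [:monom 1 1:]"
  define f where "f j = coeff U j * coeff ((Yop N ^^ j) X) n" for j
  have "coeff (mulA N U X) n = (\<Sum>j\<le>Suc n. f j)"
    by (simp add: mulA_def n coeff_sum f_def)
  also have "\<dots> = (\<Sum>j<n. f j) + f n + f (Suc n)"
    by (simp add: lessThan_Suc_atMost[symmetric])
  also have "(\<Sum>j<n. f j) = 0"
  proof (rule sum.neutral, intro ballI)
    fix j assume "j \<in> {..<n}"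
    have "degree ((Yop N ^^ j) X) = j" using YX_coeffs unfolding X_def by blast
    then have "degree ((Yop N ^^ j) X) < n" using \<open>j \<in> {..<n}\<close> by simp
    then show "f j = 0" by (simp add: f_def coeff_eq_0)
  qed
  moreover have Y1: "coeff ((Yop N ^^ n) X) n = monom 1 1" using YX_coeffs unfolding X_def by blast
  moreover have "coeff ((Yop N ^^ Suc n) X) n = monom (of_nat (Suc n)) N" using YX_coeffs unfolding X_def by blast
  then have Y2: "coeff (Yop N ((Yop N ^^ n) X)) n = monom (of_nat (Suc n)) N" by simp
  ultimately have "coeff (mulA N U X) n = coeff U n * monom 1 1 + lead_coeff U * monom (of_nat (Suc n)) N"
    using n by (simp add: f_def)
  moreover have "coeff (mulA N U X) n = monom 1 1 * coeff U n"
    using e X_def by (metis coeff_smult)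
  ultimately have "lead_coeff U * monom (of_nat (Suc n)) N = 0" by (simp add: mult.commute)
  moreover have "lead_coeff U \<noteq> 0" using U by simp
  moreover have "(of_nat (Suc n) :: 'k) \<noteq> 0" by (metis of_nat_eq_0_iff nat.distinct(1))
  then have "monom (of_nat (Suc n) :: 'k) N \<noteq> 0" by (simp only: monom_eq_0_iff simp_thms)
  ultimately show False by simp
qed

lemma normal_B:
  fixes U :: "'k::field_char_0 poly poly"
  assumes U: "U \<noteq> 0" and e: "smult (monom 1 1) U = mulA N U B"
  shows "B = [:monom 1 1:]"
proof -
  have x0: "(monom 1 1 :: 'k poly) \<noteq> 0" by simp
  have B: "B \<noteq> 0"
  proof
    assume "B = 0"
    with e have "smult (monom 1 1) U = 0" by simp
    with U x0 show False by simp
  qed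
  have dm: "degree (mulA N U B) = degree U + degree B" "lead_coeff (mulA N U B) = lead_coeff U * lead_coeff B"
    using mulA_degree[OF U B, where N=N] by auto
  have ds: "degree (smult (monom 1 1) U) = degree U" by (simp add: degree_smult_eq)
  have ls: "lead_coeff (smult (monom 1 1) U) = monom 1 1 * lead_coeff U" by (simp add: lead_coeff_smult)
  have d: "degree U = degree U + degree B"
    using dm(1) ds e by metis
  have l: "monom 1 1 * lead_coeff U = lead_coeff U * lead_coeff B" using dm(2) ls e by metis
  from d have dB: "degree B = 0" by simp
  from l U have "lead_coeff U * monom 1 1 = lead_coeff U * lead_coeff B" by (simp add: mult.commute)
  then have "lead_coeff B = monom 1 1" using U by (metis mult_left_cancel leading_coeff_0_iff)
  with dB show ?thesis by (metis degree_0_id)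
qed

lemma Dd_q: "N \<ge> 1 \<Longrightarrow> Dd N (monom c i) = monom (of_nat i) (N - 1) * monom c i"
  by (cases i) (auto simp: Dd_def pderiv_monom mult_monom)

lemma poly_decomp: "(A::'a::comm_ring_1 poly) = (\<Sum>j\<le>degree A. smult (coeff A j) (monom 1 j))"
proof -
  have "(\<Sum>j\<le>degree A. smult (coeff A j) (monom 1 j)) = (\<Sum>j\<le>degree A. monom (coeff A j) j)"
    by (simp add: smult_monom)
  then show ?thesis using poly_as_sum_of_monoms[of A] by simp
qed

lemma normal_xi_1:
  fixes c :: "'k::field_char_0" and A :: "'k poly poly"
  assumes N: "N \<ge> 1"
  shows "\<exists>B. smult (monom c i) A = mulA N B [:monom c i:]"
proof -
  define q where "q = (monom c i :: 'k poly)"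
  define r where "r = (monom (of_nat i) (N - 1) :: 'k poly)"
  have Dq: "Dd N q = r * q" using Dd_q[OF N] q_def r_def by simp
  have "\<exists>B. smult q (monom 1 j) = mulA N B [:q:]" for j
  proof (induction j)
    case 0 then show ?case by (rule exI[of _ 1]) (simp add: mulA_def)
  next
    case (Suc j)
    then obtain B where B: "smult q (monom 1 j) = mulA N B [:q:]" by blast
    have "smult q (monom 1 (Suc j)) = smult q (Yop N (monom 1 j))" by (simp add: Yop_monom1)
    also have "\<dots> = Yop N (smult q (monom 1 j)) - smult (Dd N q) (monom 1 j)"
      by (simp add: Yop_smult)
    also have "\<dots> = mulA N (Yop N B - smult r B) [:q:]"
      by (simp add: B Dq mulA_diff_left mulA_Yop_left mulA_smult_left flip: smult_smult B)
    finally show ?case by blast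
  qed
  then obtain Bf where Bf: "\<And>j. smult q (monom 1 j) = mulA N (Bf j) [:q:]" by metis
  have "smult q A = (\<Sum>j\<le>degree A. smult (coeff A j) (smult q (monom 1 j)))"
    by (subst poly_decomp[of A]) (simp add: smult_sum_right mult.commute)
  also have "\<dots> = mulA N (\<Sum>j\<le>degree A. smult (coeff A j) (Bf j)) [:q:]"
    by (simp add: Bf mulA_sum_left mulA_smult_left)
  finally show ?thesis unfolding q_def by blast
qed

lemma normal_xi_2:
  fixes c :: "'k::field_char_0" and A :: "'k poly poly"
  assumes N: "N \<ge> 1"
  shows "\<exists>B. mulA N A [:monom c i:] = smult (monom c i) B"
proof -
  define q where "q = (monom c i :: 'k poly)"
  define r where "r = (monom (of_nat i) (N - 1) :: 'k poly)"
  have Dq: "Dd N q = r * q" using Dd_q[OF N] q_def r_def by simp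
  have "\<exists>Z. (Yop N ^^ j) [:q:] = smult q Z" for j
  proof (induction j)
    case 0 then show ?case by (rule exI[of _ 1]) simp
  next
    case (Suc j)
    then obtain Z where Z: "(Yop N ^^ j) [:q:] = smult q Z" by blast
    have "(Yop N ^^ Suc j) [:q:] = smult q (Yop N Z + smult r Z)"
      by (simp add: Z Yop_smult Dq smult_add_right mult.commute)
    then show ?case by blast
  qed
  then obtain Zf where Zf: "\<And>j. (Yop N ^^ j) [:q:] = smult q (Zf j)" by metis
  have "mulA N A [:q:] = smult q (\<Sum>j\<le>degree A. smult (coeff A j) (Zf j))"
    by (simp add: mulA_def Zf smult_sum_right mult.commute)
  then show ?thesis unfolding q_def by blast
qed




abbreviation nw :: "nat \<Rightarrow> nat \<Rightarrow> bool list" where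
  "nw a j \<equiv> replicate a False @ replicate j True"

lemma nw_inj: "nw a j = nw a' j' \<Longrightarrow> a = a' \<and> j = j'"
  apply (drule arg_cong[where f="\<lambda>l. (length (filter Not l), length (filter id l))"])
  apply simp
  done

definition Psi :: "nat \<Rightarrow> 'k::field_char_0 fa \<Rightarrow> 'k poly poly" where
  "Psi N f = (\<Sum>w\<in>{w. f w \<noteq> 0}. smult [:f w:] (psiw N w))"

lemma fmon_apply: "fmon w u = (if u = w then 1 else 0)" by (simp add: fmon_def)

lemma fin_fmon[simp]: "fmon w \<in> fin"
proof -
  have "{u. fmon w u \<noteq> (0::'a)} \<subseteq> {w}" by (auto simp: fmon_def)
  then show ?thesis unfolding fin_def by (auto intro: finite_subset)
qed

lemma fin_zero[simp]: "(\<lambda>_. 0) \<in> fin" by (simp add: fin_def)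

lemma fin_add: "(f::'k::field_char_0 fa) \<in> fin \<Longrightarrow> g \<in> fin \<Longrightarrow> (\<lambda>u. f u + g u) \<in> fin"
  unfolding fin_def mem_Collect_eq by (rule finite_subset[of _ "{w. f w \<noteq> 0} \<union> {w. g w \<noteq> 0}"]) auto

lemma fin_scale: "(f::'k::field_char_0 fa) \<in> fin \<Longrightarrow> (\<lambda>u. c * f u) \<in> fin"
  unfolding fin_def mem_Collect_eq by (rule finite_subset[of _ "{w. f w \<noteq> 0}"]) auto

lemma fin_sum: "finite S \<Longrightarrow> (\<And>s. s \<in> S \<Longrightarrow> (F s :: 'k::field_char_0 fa) \<in> fin) \<Longrightarrow> (\<lambda>u. \<Sum>s\<in>S. F s u) \<in> fin"
proof (induction S rule: finite_induct)
  case empty then show ?case by simp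
next
  case (insert x S)
  then show ?case using fin_add[of "F x" "\<lambda>u. \<Sum>s\<in>S. F s u"] by simp
qed

lemma fin_fadd: "(f::'k::field_char_0 fa) \<in> fin \<Longrightarrow> g \<in> fin \<Longrightarrow> fadd f g \<in> fin"
  unfolding fadd_def by (rule fin_add)
lemma fin_fsmul: "(f::'k::field_char_0 fa) \<in> fin \<Longrightarrow> fsmul c f \<in> fin"
  unfolding fsmul_def by (rule fin_scale)
lemma fin_fsub: "(f::'k::field_char_0 fa) \<in> fin \<Longrightarrow> g \<in> fin \<Longrightarrow> fsub f g \<in> fin"
proof -
  assume "f \<in> fin" "g \<in> fin"
  then have "(\<lambda>u. f u + (-1) * g u) \<in> fin" by (intro fin_add fin_scale)
  then show ?thesis by (simp add: fsub_def)
qed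

lemma rep_fin: "(f::'k::field_char_0 fa) \<in> fin \<Longrightarrow> f = (\<lambda>u. \<Sum>w\<in>{w. f w \<noteq> 0}. f w * fmon w u)"
  by (rule ext) (simp add: fmon_apply fin_def if_distrib sum.delta' cong: if_cong)

lemma fmul_mon: "fmul (fmon p) (fmon q) = (fmon (p @ q) :: 'k::field_char_0 fa)"
proof (rule ext)
  fix w :: "bool list"
  have eq: "(fmon p (take i w) * fmon q (drop i w) :: 'k) = (if i = length p then (if w = p @ q then 1 else 0) else 0)"
    if "i \<le> length w" for i
  proof -
    have iff: "(take i w = p \<and> drop i w = q) \<longleftrightarrow> (i = length p \<and> w = p @ q)"
    proof
      assume h: "take i w = p \<and> drop i w = q"
      then have "length p = i" using that by auto
      moreover have "w = p @ q" using h by (metis append_take_drop_id)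
      ultimately show "i = length p \<and> w = p @ q" by simp
    qed auto
    have "fmon p (take i w) * fmon q (drop i w) = (if take i w = p \<and> drop i w = q then 1 else (0::'k))"
      by (simp add: fmon_def)
    also have "\<dots> = (if i = length p \<and> w = p @ q then 1 else 0)" by (simp only: iff)
    finally show ?thesis by simp
  qed
  have "fmul (fmon p) (fmon q) w = (\<Sum>i\<le>length w. (if i = length p then (if w = p @ q then 1 else 0) else 0 :: 'k))"
    unfolding fmul_def by (rule sum.cong) (auto simp: eq)
  also have "\<dots> = fmon (p @ q) w"
    by (auto simp: fmon_def)
  finally show "fmul (fmon p) (fmon q) w = (fmon (p @ q) w :: 'k)" .
qed

lemma fmul_sum_left: "fmul (\<lambda>u. \<Sum>s\<in>S. c s * F s u) g = (\<lambda>u. \<Sum>s\<in>S. c s * fmul (F s) g u)"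
  unfolding fmul_def by (rule ext) (simp add: sum_distrib_left sum_distrib_right mult.assoc sum.swap[of _ S])

lemma fmul_sum_right: "fmul g (\<lambda>u. \<Sum>s\<in>S. c s * F s u) = (\<lambda>u. \<Sum>s\<in>S. c s * fmul g (F s) u)"
  unfolding fmul_def by (rule ext) (simp add: sum_distrib_left sum_distrib_right mult.left_commute sum.swap[of _ S])

lemma fmul_fsub_left: "fmul (fsub (f::'k::field_char_0 fa) g) h = fsub (fmul f h) (fmul g h)"
  unfolding fmul_def fsub_def by (rule ext) (simp add: right_diff_distrib left_diff_distrib sum_subtractf)

lemma fmul_fsub_right: "fmul h (fsub (f::'k::field_char_0 fa) g) = fsub (fmul h f) (fmul h g)"
  unfolding fmul_def fsub_def by (rule ext) (simp add: right_diff_distrib left_diff_distrib sum_subtractf)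

lemma fmul_unit_right: "fmul h (fmon []) = h"
proof (rule ext)
  fix w :: "bool list"
  have "fmul h (fmon []) w = (\<Sum>i\<le>length w. if i = length w then h w else 0)"
    unfolding fmul_def by (rule sum.cong) (auto simp: fmon_def)
  then show "fmul h (fmon []) w = h w" by simp
qed

lemma fmul_const_left: "fmul (fsmul c (fmon [])) a = fsmul c a"
proof (rule ext)
  fix w :: "bool list"
  have "fmul (fsmul c (fmon [])) a w = (\<Sum>i\<le>length w. if i = 0 then c * a w else 0)"
    unfolding fmul_def by (rule sum.cong) (auto simp: fmon_def fsmul_def)
  then show "fmul (fsmul c (fmon [])) a w = fsmul c a w" by (simp add: fsmul_def)
qed

lemma fmul_fin: "(f::'k::field_char_0 fa) \<in> fin \<Longrightarrow> g \<in> fin \<Longrightarrow> fmul f g = (\<lambda>u. \<Sum>w\<in>{w. f w \<noteq> 0}. f w * (\<Sum>v\<in>{v. g v \<noteq> 0}. g v * fmon (w @ v) u))"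
proof -
  assume f: "f \<in> fin" and g: "g \<in> fin"
  have "fmul f g = fmul (\<lambda>u. \<Sum>w\<in>{w. f w \<noteq> 0}. f w * fmon w u) g"
    using rep_fin[OF f] by simp
  also have "\<dots> = (\<lambda>u. \<Sum>w\<in>{w. f w \<noteq> 0}. f w * fmul (fmon w) g u)"
    by (rule fmul_sum_left)
  also have "\<dots> = (\<lambda>u. \<Sum>w\<in>{w. f w \<noteq> 0}. f w * (\<Sum>v\<in>{v. g v \<noteq> 0}. g v * fmon (w @ v) u))"
  proof -
    have "fmul (fmon w) g = (\<lambda>u. \<Sum>v\<in>{v. g v \<noteq> 0}. g v * fmon (w @ v) u)" for w
    proof -
      have "fmul (fmon w) g = fmul (fmon w) (\<lambda>u. \<Sum>v\<in>{v. g v \<noteq> 0}. g v * fmon v u)"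
        using rep_fin[OF g] by simp
      also have "\<dots> = (\<lambda>u. \<Sum>v\<in>{v. g v \<noteq> 0}. g v * fmul (fmon w) (fmon v) u)"
        by (rule fmul_sum_right)
      finally show ?thesis by (simp add: fmul_mon)
    qed
    then show ?thesis by simp
  qed
  finally show ?thesis .
qed

lemma fin_fmul: "(f::'k::field_char_0 fa) \<in> fin \<Longrightarrow> g \<in> fin \<Longrightarrow> fmul f g \<in> fin"
proof -
  assume f: "f \<in> fin" and g: "g \<in> fin"
  have ff: "finite {w. f w \<noteq> 0}" "finite {w. g w \<noteq> 0}" using f g by (auto simp: fin_def)
  show ?thesis
    by (subst fmul_fin[OF f g]) (intro fin_sum fin_scale fin_fmon ff)+
qed

lemma smult_const_add: "smult [:a + b:] P = smult [:a:] P + smult [:b:] P"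
  by (simp add: smult_add_left[symmetric])

lemma smult_const_1: "smult [:1:] (P::'a::comm_ring_1 poly poly) = P"
  by (simp add: one_pCons[symmetric])

lemma smult_const_m1: "smult [:-1:] P = - (P::'a::comm_ring_1 poly poly)"
  by (rule poly_eqI) simp

lemma Psi_W: "finite W \<Longrightarrow> {w. (f::'k::field_char_0 fa) w \<noteq> 0} \<subseteq> W \<Longrightarrow> Psi N f = (\<Sum>w\<in>W. smult [:f w:] (psiw N w))"
  unfolding Psi_def by (rule sum.mono_neutral_left) auto

lemma Psi_zero[simp]: "Psi N (\<lambda>_. 0::'k::field_char_0) = 0" by (simp add: Psi_def)

lemma Psi_add: "(f::'k::field_char_0 fa) \<in> fin \<Longrightarrow> g \<in> fin \<Longrightarrow> Psi N (\<lambda>u. f u + g u) = Psi N f + Psi N g"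
proof -
  assume f: "f \<in> fin" and g: "g \<in> fin"
  define W where "W = {w. f w \<noteq> 0} \<union> {w. g w \<noteq> 0}"
  have W: "finite W" using f g by (simp add: W_def fin_def)
  have "Psi N (\<lambda>u. f u + g u) = (\<Sum>w\<in>W. smult [:f w + g w:] (psiw N w))"
    by (rule Psi_W[OF W]) (auto simp: W_def)
  also have "\<dots> = (\<Sum>w\<in>W. smult [:f w:] (psiw N w)) + (\<Sum>w\<in>W. smult [:g w:] (psiw N w))"
    by (simp add: sum.distrib smult_const_add)
  also have "\<dots> = Psi N f + Psi N g"
    by (simp add: Psi_W[OF W, of f] Psi_W[OF W, of g] W_def)
  finally show ?thesis .
qed

lemma Psi_scale: "(f::'k::field_char_0 fa) \<in> fin \<Longrightarrow> Psi N (\<lambda>u. c * f u) = smult [:c:] (Psi N f)"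
proof -
  assume f: "f \<in> fin"
  define W where "W = {w. f w \<noteq> 0}"
  have W: "finite W" using f by (simp add: W_def fin_def)
  have "Psi N (\<lambda>u. c * f u) = (\<Sum>w\<in>W. smult [:c * f w:] (psiw N w))"
    by (rule Psi_W[OF W]) (auto simp: W_def)
  also have "\<dots> = smult [:c:] (\<Sum>w\<in>W. smult [:f w:] (psiw N w))"
    by (simp add: smult_sum_right ac_simps)
  also have "\<dots> = smult [:c:] (Psi N f)" by (simp add: Psi_def W_def)
  finally show ?thesis .
qed

lemma Psi_sum: "finite S \<Longrightarrow> (\<And>s. s \<in> S \<Longrightarrow> (F s::'k::field_char_0 fa) \<in> fin) \<Longrightarrow> Psi N (\<lambda>u. \<Sum>s\<in>S. F s u) = (\<Sum>s\<in>S. Psi N (F s))"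
proof (induction S rule: finite_induct)
  case empty then show ?case by simp
next
  case (insert x S)
  have "(\<lambda>u. \<Sum>s\<in>S. F s u) \<in> fin" using insert by (intro fin_sum) auto
  then show ?case using insert Psi_add[of "F x" "\<lambda>u. \<Sum>s\<in>S. F s u" N] by simp
qed

lemma Psi_fmon: "Psi N (fmon w :: 'k::field_char_0 fa) = psiw N w"
proof -
  have "{u. fmon w u \<noteq> (0::'k)} = {w}" by (auto simp: fmon_def)
  then show ?thesis by (simp add: Psi_def fmon_def smult_const_1)
qed

lemma Psi_fsub: "(f::'k::field_char_0 fa) \<in> fin \<Longrightarrow> g \<in> fin \<Longrightarrow> Psi N (fsub f g) = Psi N f - Psi N g"
proof -
  assume f: "f \<in> fin" and g: "g \<in> fin"
  have "fsub f g = (\<lambda>u. f u + (-1) * g u)" by (rule ext) (simp add: fsub_def)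
  moreover have "Psi N (\<lambda>u. f u + (-1) * g u) = Psi N f + smult [:-1:] (Psi N g)"
    using Psi_add[OF f fin_scale[OF g, of "-1"]] Psi_scale[OF g, of N "-1"] by simp
  ultimately show ?thesis by (simp add: smult_const_m1)
qed

lemma Psi_fadd: "(f::'k::field_char_0 fa) \<in> fin \<Longrightarrow> g \<in> fin \<Longrightarrow> Psi N (fadd f g) = Psi N f + Psi N g"
  unfolding fadd_def by (rule Psi_add)

lemma Psi_fsmul: "(f::'k::field_char_0 fa) \<in> fin \<Longrightarrow> Psi N (fsmul c f) = smult [:c:] (Psi N f)"
  unfolding fsmul_def by (rule Psi_scale)

lemma Psi_hom: "(f::'k::field_char_0 fa) \<in> fin \<Longrightarrow> g \<in> fin \<Longrightarrow> Psi N (fmul f g) = mulA N (Psi N f) (Psi N g)"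
proof -
  assume f: "f \<in> fin" and g: "g \<in> fin"
  define Sf where "Sf = {w. f w \<noteq> 0}"
  define Sg where "Sg = {w. g w \<noteq> 0}"
  have fSf: "finite Sf" "finite Sg" using f g by (auto simp: Sf_def Sg_def fin_def)
  have inner: "(\<lambda>u. \<Sum>v\<in>Sg. g v * fmon (w @ v) u) \<in> fin" for w
    using fSf by (intro fin_sum fin_scale) auto
  have "Psi N (fmul f g) = Psi N (\<lambda>u. \<Sum>w\<in>Sf. f w * (\<Sum>v\<in>Sg. g v * fmon (w @ v) u))"
    using fmul_fin[OF f g] by (simp add: Sf_def Sg_def)
  also have "\<dots> = (\<Sum>w\<in>Sf. Psi N (\<lambda>u. f w * (\<Sum>v\<in>Sg. g v * fmon (w @ v) u)))"
    using fSf inner by (intro Psi_sum fin_scale) auto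
  also have "\<dots> = (\<Sum>w\<in>Sf. smult [:f w:] (\<Sum>v\<in>Sg. smult [:g v:] (psiw N (w @ v))))"
  proof (rule sum.cong[OF refl])
    fix w
    have "Psi N (\<lambda>u. f w * (\<Sum>v\<in>Sg. g v * fmon (w @ v) u)) = smult [:f w:] (Psi N (\<lambda>u. \<Sum>v\<in>Sg. g v * fmon (w @ v) u))"
      using inner by (rule Psi_scale)
    also have "Psi N (\<lambda>u. \<Sum>v\<in>Sg. g v * fmon (w @ v) u) = (\<Sum>v\<in>Sg. Psi N (\<lambda>u. g v * fmon (w @ v) u))"
      using fSf by (intro Psi_sum fin_scale) auto
    also have "\<dots> = (\<Sum>v\<in>Sg. smult [:g v:] (psiw N (w @ v)))"
      by (simp add: Psi_scale Psi_fmon)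
    finally show "Psi N (\<lambda>u. f w * (\<Sum>v\<in>Sg. g v * fmon (w @ v) u)) = smult [:f w:] (\<Sum>v\<in>Sg. smult [:g v:] (psiw N (w @ v)))" .
  qed
  also have "\<dots> = mulA N (\<Sum>w\<in>Sf. smult [:f w:] (psiw N w)) (\<Sum>v\<in>Sg. smult [:g v:] (psiw N v))"
    apply (simp add: mulA_sum_left mulA_sum_right mulA_smult_left mulA_smult_right psiw_append smult_sum_right)
    apply (rule sum.swap)
    done
  also have "\<dots> = mulA N (Psi N f) (Psi N g)" by (simp add: Psi_def Sf_def Sg_def)
  finally show ?thesis .
qed




lemma relA_eq: "relA N = fsub (fsub (fmon [True, False]) (fmon [False, True])) (fmon (replicate N False) :: 'k::field_char_0 fa)"
  by (simp add: relA_def genX_def genY_def Xpow_def fmul_mon)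

lemma psiw_repF0: "psiw N (replicate a False) = smult (monom 1 a) (1 :: 'k::field_char_0 poly poly)"
  using psiw_repF[of N a "[]"] by simp

lemma Psi_relA: "Psi N (relA N :: 'k::field_char_0 fa) = 0"
proof -
  have "Psi N (relA N :: 'k fa) = psiw N [True, False] - psiw N [False, True] - psiw N (replicate N False)"
    by (simp add: relA_eq Psi_fsub fin_fsub Psi_fmon)
  also have "\<dots> = 0"
  proof -
    have y: "Yop N (smult (monom 1 1) 1) = smult (monom 1 1) (Yop N 1) + smult (Dd N (monom 1 1)) (1 :: 'k poly poly)"
      by (rule Yop_smult)
    have "psiw N [True, False] - psiw N [False, True] - psiw N (replicate N False)
       = Yop N (smult (monom 1 1) 1) - smult (monom 1 1) (Yop N 1) - smult (monom 1 N) (1 :: 'k poly poly)"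
      by (simp only: psiw.simps psiw_repF0 if_True if_False)
    also have "\<dots> = 0" by (simp only: y Dd_x) simp
    finally show ?thesis .
  qed
  finally show ?thesis .
qed

lemma ideal_fin: "(a :: 'k::field_char_0 fa) \<in> idealA N \<Longrightarrow> a \<in> fin \<and> Psi N a = 0"
proof (induction rule: idealA.induct)
  case gen
  have "relA N \<in> (fin :: 'k fa set)" by (simp add: relA_eq fin_fsub)
  then show ?case using Psi_relA by blast
next
  case zero then show ?case by simp
next
  case (add a b) then show ?case by (simp add: fin_fadd Psi_fadd)
next
  case (mul a p q) then show ?case by (simp add: fin_fmul Psi_hom)
qed

lemma eqA_Psi: "(f :: 'k::field_char_0 fa) \<in> fin \<Longrightarrow> g \<in> fin \<Longrightarrow> eqA N f g \<Longrightarrow> Psi N f = Psi N g"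
  unfolding eqA_def using ideal_fin by (fastforce simp: Psi_fsub)

lemma I_fsmul: "(a :: 'k::field_char_0 fa) \<in> idealA N \<Longrightarrow> fsmul c a \<in> idealA N"
proof -
  assume a: "a \<in> idealA N"
  have "fmul (fmul (fsmul c (fmon [])) a) (fmon []) \<in> idealA N"
    by (rule idealA.mul[OF a]) (auto intro: fin_fsmul)
  then show ?thesis by (simp add: fmul_unit_right fmul_const_left)
qed

lemma I_sum: "finite S \<Longrightarrow> (\<And>s. s \<in> S \<Longrightarrow> (F s :: 'k::field_char_0 fa) \<in> idealA N) \<Longrightarrow> (\<lambda>u. \<Sum>s\<in>S. c s * F s u) \<in> idealA N"
proof (induction S rule: finite_induct)
  case empty
  then show ?case using idealA.zero by simp
next
  case (insert x S)
  have "fadd (fsmul (c x) (F x)) (\<lambda>u. \<Sum>s\<in>S. c s * F s u) \<in> idealA N"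
    using insert by (intro idealA.add I_fsmul) auto
  moreover have "fadd (fsmul (c x) (F x)) (\<lambda>u. \<Sum>s\<in>S. c s * F s u) = (\<lambda>u. \<Sum>s\<in>insert x S. c s * F s u)"
    using insert by (simp add: fadd_def fsmul_def)
  ultimately show ?case by simp
qed

lemma I_prefix: "(a :: 'k::field_char_0 fa) \<in> idealA N \<Longrightarrow> fmul (fmon p) a \<in> idealA N"
  using idealA.mul[of a N "fmon p" "fmon []"] by (simp add: fmul_unit_right)

lemma eqA_refl: "eqA N (f :: 'k::field_char_0 fa) f"
proof -
  have "fsub f f = (\<lambda>_. 0)" by (simp add: fsub_def)
  then show ?thesis by (simp add: eqA_def idealA.zero)
qed

lemma eqA_eq: "(f :: 'k::field_char_0 fa) = g \<Longrightarrow> eqA N f g"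
  by (simp add: eqA_refl)

lemma eqA_sym: "eqA N (f :: 'k::field_char_0 fa) g \<Longrightarrow> eqA N g f"
proof -
  assume "eqA N f g"
  then have "fsmul (-1) (fsub f g) \<in> idealA N" unfolding eqA_def by (rule I_fsmul)
  moreover have "fsmul (-1) (fsub f g) = fsub g f" by (rule ext) (simp add: fsmul_def fsub_def)
  ultimately show ?thesis by (simp add: eqA_def)
qed

lemma eqA_trans: "eqA N (f :: 'k::field_char_0 fa) g \<Longrightarrow> eqA N g h \<Longrightarrow> eqA N f h"
proof -
  assume "eqA N f g" "eqA N g h"
  then have "fadd (fsub f g) (fsub g h) \<in> idealA N" unfolding eqA_def by (rule idealA.add)
  moreover have "fadd (fsub f g) (fsub g h) = fsub f h" by (rule ext) (simp add: fadd_def fsub_def)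
  ultimately show ?thesis by (simp add: eqA_def)
qed

lemma eqA_add: "eqA N (f :: 'k::field_char_0 fa) g \<Longrightarrow> eqA N f' g' \<Longrightarrow> eqA N (\<lambda>u. f u + f' u) (\<lambda>u. g u + g' u)"
proof -
  assume "eqA N f g" "eqA N f' g'"
  then have "fadd (fsub f g) (fsub f' g') \<in> idealA N" unfolding eqA_def by (rule idealA.add)
  moreover have "fadd (fsub f g) (fsub f' g') = fsub (\<lambda>u. f u + f' u) (\<lambda>u. g u + g' u)"
    by (rule ext) (simp add: fadd_def fsub_def)
  ultimately show ?thesis by (simp add: eqA_def)
qed

lemma eqA_sum: "finite S \<Longrightarrow> (\<And>s. s \<in> S \<Longrightarrow> eqA N (F s :: 'k::field_char_0 fa) (G s)) \<Longrightarrow>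
   eqA N (\<lambda>u. \<Sum>s\<in>S. c s * F s u) (\<lambda>u. \<Sum>s\<in>S. c s * G s u)"
proof -
  assume S: "finite S" and e: "\<And>s. s \<in> S \<Longrightarrow> eqA N (F s) (G s)"
  have "(\<lambda>u. \<Sum>s\<in>S. c s * fsub (F s) (G s) u) \<in> idealA N"
    using S e by (intro I_sum) (auto simp: eqA_def)
  moreover have "(\<lambda>u. \<Sum>s\<in>S. c s * fsub (F s) (G s) u) = fsub (\<lambda>u. \<Sum>s\<in>S. c s * F s u) (\<lambda>u. \<Sum>s\<in>S. c s * G s u)"
    by (rule ext) (simp add: fsub_def right_diff_distrib sum_subtractf)
  ultimately show ?thesis by (simp add: eqA_def)
qed

lemma rel_rw: "eqA N (fmon (p @ [True, False] @ z) :: 'k::field_char_0 fa)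
   (\<lambda>u. fmon (p @ [False, True] @ z) u + fmon (p @ replicate N False @ z) u)"
proof -
  have "fmul (fmul (fmon p) (relA N :: 'k fa)) (fmon z) \<in> idealA N"
    by (rule idealA.mul[OF idealA.gen]) auto
  moreover have "fmul (fmul (fmon p) (relA N)) (fmon z) = fsub (fmon (p @ [True, False] @ z) :: 'k fa)
   (\<lambda>u. fmon (p @ [False, True] @ z) u + fmon (p @ replicate N False @ z) u)"
  proof -
    have "fmul (fmul (fmon p) (relA N)) (fmon z) = fsub (fsub (fmon (p @ [True, False] @ z)) (fmon (p @ [False, True] @ z))) (fmon (p @ replicate N False @ z) :: 'k fa)"
      by (simp add: relA_eq fmul_fsub_right fmul_fsub_left fmul_mon)
    then show ?thesis by (simp add: fsub_def diff_diff_eq)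
  qed
  ultimately show ?thesis by (simp add: eqA_def)
qed

lemma rw_gen:
  assumes N: "N \<ge> 1"
  shows "eqA N (fmon (p @ True # replicate a False @ v) :: 'k::field_char_0 fa)
      (\<lambda>u. fmon (p @ replicate a False @ True # v) u + of_nat a * fmon (p @ replicate (a + N - 1) False @ v) u)"
proof (induction a arbitrary: p)
  case 0 then show ?case by (intro eqA_eq) auto
next
  case (Suc a)
  have h1: "eqA N (fmon (p @ [True, False] @ (replicate a False @ v)) :: 'k fa)
     (\<lambda>u. fmon (p @ [False, True] @ (replicate a False @ v)) u + fmon (p @ replicate N False @ (replicate a False @ v)) u)"
    by (rule rel_rw)
  have h2: "eqA N (fmon ((p @ [False]) @ True # replicate a False @ v) :: 'k fa)
      (\<lambda>u. fmon ((p @ [False]) @ replicate a False @ True # v) u + of_nat a * fmon ((p @ [False]) @ replicate (a + N - 1) False @ v) u)"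
    by (rule Suc.IH)
  have L1: "p @ True # replicate (Suc a) False @ v = p @ [True, False] @ (replicate a False @ v)" by simp
  have L2: "(p @ [False]) @ True # replicate a False @ v = p @ [False, True] @ (replicate a False @ v)" by simp
  have L3: "(p @ [False]) @ replicate a False @ True # v = p @ replicate (Suc a) False @ True # v" by simp
  have L4: "(p @ [False]) @ replicate (a + N - 1) False @ v = p @ replicate (Suc a + N - 1) False @ v"
  proof -
    have "Suc (a + N - 1) = Suc a + N - 1" using N by simp
    then have "replicate (Suc a + N - 1) False = False # replicate (a + N - 1) False" by (metis replicate_Suc)
    then show ?thesis by simp
  qed
  have L5: "p @ replicate N False @ (replicate a False @ v) = p @ replicate (Suc a + N - 1) False @ v"
    using N by (simp add: replicate_add[symmetric] add.commute)
  define A where "A = (fmon (p @ replicate (Suc a) False @ True # v) :: 'k fa)"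
  define E where "E = (fmon (p @ replicate (Suc a + N - 1) False @ v) :: 'k fa)"
  have h1': "eqA N (fmon (p @ True # replicate (Suc a) False @ v) :: 'k fa)
     (\<lambda>u. fmon (p @ [False, True] @ (replicate a False @ v)) u + E u)"
    using h1 unfolding L1 L5 E_def .
  have h2': "eqA N (fmon (p @ [False, True] @ (replicate a False @ v)) :: 'k fa) (\<lambda>u. A u + of_nat a * E u)"
    using h2 unfolding L2 L3 L4 A_def E_def .
  have "eqA N (\<lambda>u. fmon (p @ [False, True] @ (replicate a False @ v)) u + E u) (\<lambda>u. (A u + of_nat a * E u) + E u)"
    by (rule eqA_add[OF h2' eqA_refl])
  with h1' have "eqA N (fmon (p @ True # replicate (Suc a) False @ v) :: 'k fa) (\<lambda>u. (A u + of_nat a * E u) + E u)"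
    by (rule eqA_trans)
  moreover have "(\<lambda>u. (A u + of_nat a * E u) + E u) = (\<lambda>u. A u + of_nat (Suc a) * E u)"
    by (rule ext) (simp add: algebra_simps)
  ultimately show ?case by (simp add: A_def E_def)
qed

definition nf :: "'k::field_char_0 fa \<Rightarrow> bool" where
  "nf g \<longleftrightarrow> (\<forall>u. g u \<noteq> 0 \<longrightarrow> (\<exists>a j. u = nw a j))"

lemma nf_fmon: "nf (fmon (nw a j) :: 'k::field_char_0 fa)"
proof (unfold nf_def, intro allI impI)
  fix u assume "fmon (nw a j) u \<noteq> (0::'k)"
  then have "u = nw a j" by (simp add: fmon_def split: if_splits)
  then show "\<exists>a j. u = nw a j" by blast
qed

lemma nf_add: "nf f \<Longrightarrow> nf g \<Longrightarrow> nf (\<lambda>u. f u + g u :: 'k::field_char_0)"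
  unfolding nf_def
proof (intro allI impI)
  fix u assume f: "\<forall>u. f u \<noteq> 0 \<longrightarrow> (\<exists>a j. u = nw a j)" and g: "\<forall>u. g u \<noteq> 0 \<longrightarrow> (\<exists>a j. u = nw a j)"
    and nz: "f u + g u \<noteq> 0"
  then have "f u \<noteq> 0 \<or> g u \<noteq> 0" by auto
  then show "\<exists>a j. u = nw a j" using f g by blast
qed

lemma nf_scale: "nf f \<Longrightarrow> nf (\<lambda>u. c * f u :: 'k::field_char_0)"
  unfolding nf_def by auto

lemma one_step:
  assumes N: "N \<ge> 1"
  shows "\<exists>h. h \<in> fin \<and> nf h \<and> eqA N (fmon (l # nw a j) :: 'k::field_char_0 fa) h"
proof (cases l)
  case False
  have "False # nw a j = nw (Suc a) j" by simp
  then have "eqA N (fmon (l # nw a j) :: 'k fa) (fmon (nw (Suc a) j))" using False by (simp add: eqA_refl)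
  moreover have "nf (fmon (nw (Suc a) j) :: 'k fa)"
  proof (unfold nf_def, intro allI impI)
    fix u assume "fmon (nw (Suc a) j) u \<noteq> (0::'k)"
    then have "u = nw (Suc a) j" by (simp add: fmon_def split: if_splits)
    then show "\<exists>a j. u = nw a j" by blast
  qed
  ultimately show ?thesis using fin_fmon by blast
next
  case True
  have e: "eqA N (fmon ([] @ True # replicate a False @ replicate j True) :: 'k fa)
      (\<lambda>u. fmon ([] @ replicate a False @ True # replicate j True) u + of_nat a * fmon ([] @ replicate (a + N - 1) False @ replicate j True) u)"
    by (rule rw_gen[OF N])
  have r: "True # replicate j True = replicate (Suc j) True" by simp
  define h where "h = (\<lambda>u. fmon (nw a (Suc j)) u + of_nat a * fmon (nw (a + N - 1) j) u :: 'k)"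
  have "eqA N (fmon (l # nw a j) :: 'k fa) h" using e True unfolding h_def r by simp
  moreover have "h \<in> fin" unfolding h_def by (intro fin_add fin_scale fin_fmon)
  moreover have "nf h" unfolding h_def by (intro nf_add nf_scale nf_fmon)
  ultimately show ?thesis by blast
qed

lemma nf_sum: "(\<And>s. s \<in> S \<Longrightarrow> nf (H s)) \<Longrightarrow> nf (\<lambda>u. \<Sum>s\<in>S. c s * H s u :: 'k::field_char_0)"
  unfolding nf_def
proof (intro allI impI)
  fix u assume H: "\<And>s. s \<in> S \<Longrightarrow> \<forall>u. H s u \<noteq> 0 \<longrightarrow> (\<exists>a j. u = nw a j)"
    and nz: "(\<Sum>s\<in>S. c s * H s u) \<noteq> 0"
  have "\<exists>s\<in>S. c s * H s u \<noteq> 0"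
  proof (rule ccontr)
    assume "\<not> (\<exists>s\<in>S. c s * H s u \<noteq> 0)"
    then have "(\<Sum>s\<in>S. c s * H s u) = 0" by (intro sum.neutral) auto
    with nz show False by simp
  qed
  then obtain s where "s \<in> S" "c s * H s u \<noteq> 0" by blast
  then show "\<exists>a j. u = nw a j" using H by auto
qed

lemma S1:
  assumes N: "N \<ge> 1"
  shows "\<exists>g. g \<in> fin \<and> nf g \<and> eqA N (fmon w :: 'k::field_char_0 fa) g"
proof (induction w)
  case Nil
  have "nf (fmon (nw 0 0) :: 'k fa)" by (auto simp: nf_def fmon_def)
  then show ?case by (intro exI[of _ "fmon []"]) (auto simp: eqA_refl)
next
  case (Cons l w)
  then obtain g where g: "g \<in> fin" "nf g" "eqA N (fmon w :: 'k fa) g" by blast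
  define Sg where "Sg = {v. g v \<noteq> 0}"
  have fS: "finite Sg" using g(1) by (simp add: Sg_def fin_def)
  have "\<forall>v\<in>Sg. \<exists>h. h \<in> fin \<and> nf h \<and> eqA N (fmon (l # v) :: 'k fa) h"
  proof
    fix v assume "v \<in> Sg"
    then obtain a j where "v = nw a j" using g(2) by (auto simp: Sg_def nf_def)
    then show "\<exists>h. h \<in> fin \<and> nf h \<and> eqA N (fmon (l # v) :: 'k fa) h" using one_step[OF N] by simp
  qed
  then have "\<exists>H. \<forall>v\<in>Sg. H v \<in> fin \<and> nf (H v) \<and> eqA N (fmon (l # v) :: 'k fa) (H v)"
    by (rule bchoice)
  then obtain H where H0: "\<forall>v\<in>Sg. H v \<in> fin \<and> nf (H v) \<and> eqA N (fmon (l # v) :: 'k fa) (H v)"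
    by (elim exE)
  then have H: "\<And>v. v \<in> Sg \<Longrightarrow> H v \<in> fin \<and> nf (H v) \<and> eqA N (fmon (l # v) :: 'k fa) (H v)"
    by blast
  have e1: "eqA N (fmon (l # w) :: 'k fa) (fmul (fmon [l]) g)"
  proof -
    have "fmul (fmon [l]) (fsub (fmon w) g) \<in> idealA N" using g(3) unfolding eqA_def by (rule I_prefix)
    then show ?thesis by (simp add: eqA_def fmul_fsub_right fmul_mon)
  qed
  have "fmul (fmon [l]) g = fmul (fmon [l]) (\<lambda>u. \<Sum>v\<in>Sg. g v * fmon v u)"
    using rep_fin[OF g(1)] by (simp add: Sg_def)
  also have "\<dots> = (\<lambda>u. \<Sum>v\<in>Sg. g v * fmon (l # v) u)"
    by (simp add: fmul_sum_right fmul_mon)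
  finally have e2: "fmul (fmon [l]) g = (\<lambda>u. \<Sum>v\<in>Sg. g v * fmon (l # v) u)" .
  have e3: "eqA N (\<lambda>u. \<Sum>v\<in>Sg. g v * fmon (l # v) u) (\<lambda>u. \<Sum>v\<in>Sg. g v * H v u)"
    using fS H by (intro eqA_sum) auto
  have "(\<lambda>u. \<Sum>v\<in>Sg. g v * H v u) \<in> fin" using fS H by (intro fin_sum fin_scale) auto
  moreover have "nf (\<lambda>u. \<Sum>v\<in>Sg. g v * H v u)" using H by (intro nf_sum) auto
  moreover have "eqA N (fmon (l # w)) (\<lambda>u. \<Sum>v\<in>Sg. g v * H v u)"
    using eqA_trans[OF e1[unfolded e2] e3] .
  ultimately show ?case by blast
qed

lemma coeff_Psi_nf:
  assumes g: "(g :: 'k::field_char_0 fa) \<in> fin" and n: "nf g"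
  shows "coeff (coeff (Psi N g) j) a = g (nw a j)"
proof -
  define Sg where "Sg = {w. g w \<noteq> 0}"
  have fS: "finite Sg" using g by (simp add: Sg_def fin_def)
  have t: "coeff (coeff (smult [:g w:] (psiw N w)) j) a = (if w = nw a j then g w else 0)" if w: "w \<in> Sg" for w
  proof -
    obtain a' j' where w': "w = nw a' j'" using w n by (auto simp: Sg_def nf_def)
    have ps: "psiw N w = monom (monom 1 a') j'" unfolding w' by (rule psiw_nw)
    have "coeff (coeff (smult [:g w:] (psiw N w)) j) a = g w * (if j' = j \<and> a' = a then 1 else 0)"
      unfolding ps by (simp add: coeff_monom)
    also have "(j' = j \<and> a' = a) \<longleftrightarrow> w = nw a j"
      using nw_inj[of a' j' a j] unfolding w' by blast
    then have "g w * (if j' = j \<and> a' = a then 1 else 0) = (if w = nw a j then g w else 0)"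
      by simp
    finally show ?thesis .
  qed
  have "coeff (coeff (Psi N g) j) a = (\<Sum>w\<in>Sg. coeff (coeff (smult [:g w:] (psiw N w)) j) a)"
    by (simp add: Psi_def Sg_def coeff_sum)
  also have "\<dots> = (\<Sum>w\<in>Sg. if w = nw a j then g w else 0)"
    by (rule sum.cong[OF refl], rule t)
  also have "\<dots> = g (nw a j)" using fS by (simp add: sum.delta' Sg_def)
  finally show ?thesis .
qed

lemma nf_Psi_zero:
  assumes g: "(g :: 'k::field_char_0 fa) \<in> fin" and n: "nf g" and z: "Psi N g = 0"
  shows "g = (\<lambda>_. 0)"
proof (rule ext)
  fix u
  show "g u = 0"
  proof (rule ccontr)
    assume "g u \<noteq> 0"
    then obtain a j where u: "u = nw a j" using n by (auto simp: nf_def)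
    have "g (nw a j) = coeff (coeff (Psi N g) j) a" using coeff_Psi_nf[OF g n] by simp
    also have "\<dots> = 0" by (simp add: z)
    finally show False using \<open>g u \<noteq> 0\<close> u by simp
  qed
qed

lemma kernel:
  assumes N: "N \<ge> 1" and h: "(h :: 'k::field_char_0 fa) \<in> fin" and z: "Psi N h = 0"
  shows "h \<in> idealA N"
proof -
  define Sh where "Sh = {w. h w \<noteq> 0}"
  have fS: "finite Sh" using h by (simp add: Sh_def fin_def)
  have "\<forall>w. \<exists>g. g \<in> fin \<and> nf g \<and> eqA N (fmon w :: 'k fa) g"
    using S1[OF N] by blast
  then have "\<exists>G. \<forall>w. G w \<in> fin \<and> nf (G w) \<and> eqA N (fmon w :: 'k fa) (G w)"
    by (rule choice)
  then obtain G where G0: "\<forall>w. G w \<in> fin \<and> nf (G w) \<and> eqA N (fmon w :: 'k fa) (G w)"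
    by (elim exE)
  then have G: "\<And>w. G w \<in> fin \<and> nf (G w) \<and> eqA N (fmon w :: 'k fa) (G w)"
    by blast
  define g where "g = (\<lambda>u. \<Sum>w\<in>Sh. h w * G w u)"
  have eq: "eqA N h g"
  proof -
    have "eqA N (\<lambda>u. \<Sum>w\<in>Sh. h w * fmon w u) g"
      unfolding g_def using fS G by (intro eqA_sum) auto
    then show ?thesis using rep_fin[OF h] by (simp add: Sh_def)
  qed
  have gf: "g \<in> fin" unfolding g_def using fS G by (intro fin_sum fin_scale) auto
  have gn: "nf g" unfolding g_def using G by (intro nf_sum) auto
  have "Psi N g = 0" using eqA_Psi[OF h gf eq] z by simp
  then have "g = (\<lambda>_. 0)" by (rule nf_Psi_zero[OF gf gn])
  with eq have "fsub h (\<lambda>_. 0) \<in> idealA N" by (simp add: eqA_def)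
  moreover have "fsub h (\<lambda>_. 0) = h" by (rule ext) (simp add: fsub_def)
  ultimately show ?thesis by simp
qed

lemma eqA_iff:
  assumes N: "N \<ge> 1" and f: "(f :: 'k::field_char_0 fa) \<in> fin" and g: "g \<in> fin"
  shows "eqA N f g \<longleftrightarrow> Psi N f = Psi N g"
proof
  assume "eqA N f g" then show "Psi N f = Psi N g" by (rule eqA_Psi[OF f g])
next
  assume "Psi N f = Psi N g"
  then have "Psi N (fsub f g) = 0" by (simp add: Psi_fsub f g)
  then show "eqA N f g" unfolding eqA_def by (rule kernel[OF N fin_fsub[OF f g]])
qed

lemma Psi_surj: "\<exists>f \<in> (fin :: 'k::field_char_0 fa set). Psi N f = P"
proof -
  define F where "F j = (\<lambda>u. \<Sum>a\<le>degree (coeff P j). coeff (coeff P j) a * fmon (nw a j) u :: 'k)" for j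
  have Ff: "F j \<in> fin" for j unfolding F_def by (intro fin_sum fin_scale fin_fmon) auto
  have PF: "Psi N (F j) = monom (coeff P j) j" for j
  proof -
    have "Psi N (F j) = (\<Sum>a\<le>degree (coeff P j). Psi N (\<lambda>u. coeff (coeff P j) a * fmon (nw a j) u))"
      unfolding F_def by (intro Psi_sum fin_scale fin_fmon) auto
    also have "\<dots> = (\<Sum>a\<le>degree (coeff P j). monom (monom (coeff (coeff P j) a) a) j)"
      by (simp add: Psi_scale Psi_fmon psiw_nw smult_monom)
    also have "\<dots> = monom (coeff P j) j"
      by (simp add: monom_sum[symmetric] poly_as_sum_of_monoms)
    finally show ?thesis .
  qed
  define f where "f = (\<lambda>u. \<Sum>j\<le>degree P. F j u)"
  have "f \<in> fin" unfolding f_def using Ff by (intro fin_sum) auto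
  moreover have "Psi N f = P"
    unfolding f_def using Ff by (simp add: Psi_sum PF poly_as_sum_of_monoms)
  ultimately show ?thesis by blast
qed




lemma dvd_xpow_cancel:
  fixes r s :: "'k::field poly"
  assumes nd: "\<not> [:0,1:] dvd r" and d: "r dvd [:0,1:]^n * s"
  shows "r dvd s"
  using d
proof (induction n arbitrary: s)
  case 0 then show ?case by simp
next
  case (Suc n)
  have pe: "prime_elem [:0::'k,1:]" by (rule prime_elem_linear_field_poly) simp
  from Suc.prems obtain g where g: "[:0,1:]^Suc n * s = r * g" by (auto elim: dvdE)
  have "[:0,1:] dvd [:0,1:]^Suc n * s" by (metis dvd_mult2 dvd_refl power_Suc)
  then have "[:0,1:] dvd r * g" by (simp only: g)
  then have "[:0,1:] dvd g" using nd by (simp add: prime_elem_dvd_mult_iff[OF pe])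
  then obtain h where h: "g = [:0,1:] * h" by (auto elim: dvdE)
  from g h have "[:0,1:] * ([:0,1:]^n * s) = [:0,1:] * (r * h)" by (simp add: algebra_simps)
  then have "[:0,1:]^n * s = r * h" by (subst (asm) mult_left_cancel) auto
  then have "r dvd [:0,1:]^n * s" by simp
  then show ?case by (rule Suc.IH)
qed

lemma poly_dvd_lemma:
  fixes p :: "'k::field_char_0 poly"
  assumes N: "N \<ge> 1" and p0: "p \<noteq> 0" and dv: "p dvd monom 1 N * pderiv p"
  shows "\<exists>c i. c \<noteq> 0 \<and> p = monom c i"
proof -
  obtain r where pr: "p = [:0,1:] ^ order 0 p * r" and nd: "\<not> [:0,1:] dvd r"
    using order_decomp[OF p0, of 0] by auto
  define i where "i = order 0 p"
  have xi: "[:0,1:] ^ i = (monom 1 i :: 'k poly)" by (simp add: monom_altdef)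
  have pr': "p = monom 1 i * r" using pr xi i_def by simp
  have r0: "r \<noteq> 0" using p0 pr' by auto
  have "monom 1 N * pderiv p = monom 1 i * (monom 1 N * pderiv r + smult (of_nat i) (monom 1 (N - 1) * r))"
  proof -
    have "monom 1 N * pderiv (monom 1 i :: 'k poly) = monom 1 i * smult (of_nat i) (monom 1 (N-1))"
      using N by (cases i) (auto simp: pderiv_monom mult_monom smult_monom add.commute)
    then show ?thesis unfolding pr' pderiv_mult
      by (simp add: algebra_simps)
  qed
  with dv pr' have "monom 1 i * r dvd monom 1 i * (monom 1 N * pderiv r + smult (of_nat i) (monom 1 (N - 1) * r))"
    by simp
  then have "r dvd monom 1 N * pderiv r + smult (of_nat i) (monom 1 (N - 1) * r)"
    by (subst (asm) dvd_mult_cancel_left) auto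
  moreover have "r dvd smult (of_nat i) (monom 1 (N - 1) * r)"
    by (simp add: dvd_smult)
  ultimately have "r dvd monom 1 N * pderiv r"
    using dvd_add_left_iff by blast
  moreover have xm: "monom 1 N = ([:0,1:]^N :: 'k poly)" by (simp add: monom_altdef)
  ultimately have "r dvd [:0,1:]^N * pderiv r" by simp
  then have rd: "r dvd pderiv r" by (rule dvd_xpow_cancel[OF nd])
  have "degree r = 0"
  proof (rule ccontr)
    assume "degree r \<noteq> 0"
    then have "pderiv r \<noteq> 0" by (simp add: pderiv_eq_0_iff)
    from dvd_imp_degree_le[OF rd this] have "degree r \<le> degree (pderiv r)" .
    with \<open>degree r \<noteq> 0\<close> show False by (simp add: degree_pderiv)
  qed
  then obtain c where "r = [:c:]" by (metis degree_eq_zeroE)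
  moreover have "monom 1 i * [:c:] = monom c i" by (simp add: mult.commute smult_monom)
  ultimately have "c \<noteq> 0" "p = monom c i" using pr' r0 by auto
  then show ?thesis by blast
qed


theorem lemma2p1:
  fixes N :: nat and u :: "'k::field_char_0 fa"
  assumes "N \<ge> 1" and "u \<in> fin"
  shows "(\<not> eqA N u (\<lambda>_. 0) \<and> normalA N u) \<longleftrightarrow>
         (\<exists>(c::'k) (i::nat). c \<noteq> 0 \<and> eqA N u (fsmul c (Xpow i)))"
proof -
  note N = assms(1) and uf = assms(2)
  define U where "U = Psi N u"
  have Xf: "fsmul c (Xpow i) \<in> (fin :: 'k fa set)" for c i
    unfolding Xpow_def by (intro fin_fsmul fin_fmon)
  have PsiX: "Psi N (fsmul c (Xpow i) :: 'k fa) = [:monom c i:]" for c i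
    unfolding Xpow_def by (simp add: Psi_fsmul Psi_fmon psiw_repF0 smult_monom)
  have PgX: "Psi N (genX :: 'k fa) = [:monom 1 1:]"
    unfolding genX_def by (simp add: Psi_fmon)
  have PgY: "Psi N (genY :: 'k fa) = Yop N 1"
    unfolding genY_def by (simp add: Psi_fmon)
  have gXf: "(genX :: 'k fa) \<in> fin" and gYf: "(genY :: 'k fa) \<in> fin"
    unfolding genX_def genY_def by simp_all
  show ?thesis
  proof
    assume h: "\<not> eqA N u (\<lambda>_. 0) \<and> normalA N u"
    have U0: "U \<noteq> 0" using h eqA_iff[OF N uf fin_zero] U_def by simp
    from h have cl2: "\<forall>a\<in>fin. \<exists>b\<in>fin. eqA N (fmul a u) (fmul u b)" by (simp add: normalA_def)
    obtain b where b: "b \<in> fin" "eqA N (fmul genX u) (fmul u b)" using cl2 gXf by blast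
    have "Psi N (fmul genX u) = Psi N (fmul u b)"
      using b eqA_iff[OF N fin_fmul[OF gXf uf] fin_fmul[OF uf b(1)]] by blast
    then have e: "smult (monom 1 1) U = mulA N U (Psi N b)"
      using Psi_hom[OF gXf uf] Psi_hom[OF uf b(1)] PgX U_def by (simp add: mulA_const_left)
    have "Psi N b = [:monom 1 1:]" by (rule normal_B[OF U0 e])
    with e have "degree U = 0" using normal_deg0[OF U0] by simp
    then have Ueq: "U = [:coeff U 0:]" using degree_0_id[of U] by simp
    define p where "p = coeff U 0"
    have p0: "p \<noteq> 0" using U0 Ueq p_def by auto
    obtain b' where b': "b' \<in> fin" "eqA N (fmul genY u) (fmul u b')" using cl2 gYf by blast
    have "Psi N (fmul genY u) = Psi N (fmul u b')"
      using b' eqA_iff[OF N fin_fmul[OF gYf uf] fin_fmul[OF uf b'(1)]] by blast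
    then have "mulA N (Yop N 1) U = mulA N U (Psi N b')"
      using Psi_hom[OF gYf uf] Psi_hom[OF uf b'(1)] PgY U_def by simp
    then have "Yop N U = mulA N [:p:] (Psi N b')"
      using Ueq p_def by (simp add: mulA_Yop_left)
    then have "Yop N U = smult p (Psi N b')" by (simp add: mulA_const_left)
    then have "coeff (Yop N U) 0 = p * coeff (Psi N b') 0" by simp
    moreover have "coeff (Yop N U) 0 = Dd N p" by (simp add: coeff_Yop p_def)
    ultimately have "p dvd monom 1 N * pderiv p" by (simp add: Dd_def)
    then obtain c i where ci: "c \<noteq> 0" "p = monom c i" using poly_dvd_lemma[OF N p0] by blast
    have "Psi N u = Psi N (fsmul c (Xpow i))" using PsiX Ueq ci(2) p_def U_def by simp
    then have "eqA N u (fsmul c (Xpow i))" using eqA_iff[OF N uf Xf] by blast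
    with ci(1) show "\<exists>(c::'k) (i::nat). c \<noteq> 0 \<and> eqA N u (fsmul c (Xpow i))" by blast
  next
    assume "\<exists>(c::'k) (i::nat). c \<noteq> 0 \<and> eqA N u (fsmul c (Xpow i))"
    then obtain c i where c0: "c \<noteq> 0" and e: "eqA N u (fsmul c (Xpow i))" by blast
    define q where "q = (monom c i :: 'k poly)"
    have U: "U = [:q:]" using e eqA_iff[OF N uf Xf] PsiX U_def q_def by simp
    have q0: "q \<noteq> 0" using c0 q_def by simp
    have n1: "\<not> eqA N u (\<lambda>_. 0)"
    proof
      assume "eqA N u (\<lambda>_. 0)"
      then have "U = 0" using eqA_iff[OF N uf fin_zero] U_def by simp
      with U q0 show False by simp
    qed
    have n2: "normalA N u"
      unfolding normalA_def
    proof (intro conjI ballI)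
      fix a :: "'k fa" assume a: "a \<in> fin"
      obtain B where B: "smult q (Psi N a) = mulA N B [:q:]" using normal_xi_1[OF N] q_def by blast
      obtain b where b: "b \<in> fin" "Psi N b = B" using Psi_surj by blast
      have "Psi N (fmul u a) = Psi N (fmul b u)"
        using Psi_hom[OF uf a] Psi_hom[OF b(1) uf] B b(2) U U_def by (simp add: mulA_const_left)
      then have "eqA N (fmul u a) (fmul b u)" using eqA_iff[OF N fin_fmul[OF uf a] fin_fmul[OF b(1) uf]] by blast
      then show "\<exists>b\<in>fin. eqA N (fmul u a) (fmul b u)" using b(1) by blast
    next
      fix a :: "'k fa" assume a: "a \<in> fin"
      obtain B where B: "mulA N (Psi N a) [:q:] = smult q B" using normal_xi_2[OF N] q_def by blast
      obtain b where b: "b \<in> fin" "Psi N b = B" using Psi_surj by blast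
      have "Psi N (fmul a u) = Psi N (fmul u b)"
        using Psi_hom[OF a uf] Psi_hom[OF uf b(1)] B b(2) U U_def by (simp add: mulA_const_left)
      then have "eqA N (fmul a u) (fmul u b)" using eqA_iff[OF N fin_fmul[OF a uf] fin_fmul[OF uf b(1)]] by blast
      then show "\<exists>b\<in>fin. eqA N (fmul a u) (fmul u b)" using b(1) by blast
    qed
    from n1 n2 show "\<not> eqA N u (\<lambda>_. 0) \<and> normalA N u" by blast
  qed
qed


end
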